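(* Let $f,g\in\mathcal{S}_d$ and $\beta>0$, and suppose $\hat{\mathbb{D}}_{\beta,d}(f,g)<\infty$. Then $\hat{\mathbb{D}}_{\beta,\infty}(f,g)<\infty$.
   Context: $\mathcal{S}_d$ is the set of multiplicative functions $f=f_1*\cdots*f_d$ where each $f_i$ is completely multiplicative with $|f_i(n)|\le1$, and $(a*b)(n)=\sum_{dm=n}a(d)b(m)$. For $k\in\{1,2,\dots\}\cup\{\infty\}$, $\hat{\mathbb{D}}_{\beta,k}(f,g):=\sum_p\sum_{j=1}^k\frac{|f(p^j)-g(p^j)|}{p^{j\beta}}$ (sum over primes). *)

theory Defs
  imports "HOL-Analysis.Analysis" "HOL-Library.Extended_Nat" "HOL-Library.Extended_Nonnegative_Real"
begin

text \<open>Arithmetic functions are maps nat => complex; only values at n >= 1 matter.\<close>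

definition dconv :: "(nat \<Rightarrow> complex) \<Rightarrow> (nat \<Rightarrow> complex) \<Rightarrow> nat \<Rightarrow> complex" where
  "dconv a b n = (\<Sum>d | d dvd n. a d * b (n div d))"

definition dunit :: "nat \<Rightarrow> complex" where
  "dunit n = (if n = 1 then 1 else 0)"

definition compl_mult :: "(nat \<Rightarrow> complex) \<Rightarrow> bool" where
  "compl_mult f \<longleftrightarrow> f 1 = 1 \<and> (\<forall>m n. m > 0 \<longrightarrow> n > 0 \<longrightarrow> f (m * n) = f m * f n)"

definition S_class :: "nat \<Rightarrow> (nat \<Rightarrow> complex) \<Rightarrow> bool" where
  "S_class d f \<longleftrightarrow> (\<exists>fs. length fs = d \<and>
      (\<forall>h\<in>set fs. compl_mult h \<and> (\<forall>n>0. norm (h n) \<le> 1)) \<and>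
      (\<forall>n>0. f n = foldr dconv fs dunit n))"

definition Dhat :: "real \<Rightarrow> enat \<Rightarrow> (nat \<Rightarrow> complex) \<Rightarrow> (nat \<Rightarrow> complex) \<Rightarrow> ennreal" where
  "Dhat \<beta> k f g = infsum (\<lambda>(p, j). ennreal (norm (f (p ^ j) - g (p ^ j)) / real p powr (real j * \<beta>)))
      {(p, j). prime p \<and> 1 \<le> j \<and> enat j \<le> k}"

end

theory Submission
  imports Defs "HOL-Computational_Algebra.Computational_Algebra"
begin


lemma cm_pow: assumes "compl_mult h" "p > 0" shows "h (p ^ i) = h p ^ i"
proof (induction i)
  case 0 then show ?case using assms by (simp add: compl_mult_def)
next
  case (Suc i)
  have "h (p * p ^ i) = h p * h (p ^ i)" using assms by (simp add: compl_mult_def)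
  then show ?case using Suc by simp
qed

lemma dconv_prime_pow:
  assumes "compl_mult h" "prime (p::nat)"
  shows "dconv h F (p ^ j) = (\<Sum>i=0..j. h p ^ i * F (p ^ (j - i)))"
proof -
  have p1: "p > 1" using assms prime_gt_1_nat by blast
  have S: "{d. d dvd p ^ j} = (\<lambda>i. p ^ i) ` {0..j}"
    using divides_primepow_nat[OF assms(2)] by auto
  have inj: "inj_on (\<lambda>i. p ^ i) {0..j}"
    using p1 by (auto simp: inj_on_def)
  have "dconv h F (p ^ j) = (\<Sum>i=0..j. h (p ^ i) * F (p ^ j div p ^ i))"
    unfolding dconv_def S by (simp add: sum.reindex[OF inj])
  also have "\<dots> = (\<Sum>i=0..j. h p ^ i * F (p ^ (j - i)))"
    apply (rule sum.cong, simp)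
    using p1 by (simp add: cm_pow[OF assms(1)] power_diff)
  finally show ?thesis .
qed

fun Aseq :: "complex list \<Rightarrow> complex fps" where
  "Aseq [] = 1"
| "Aseq (a # L) = Abs_fps (\<lambda>n. a ^ n) * Aseq L"

fun Cseq :: "complex list \<Rightarrow> complex fps" where
  "Cseq [] = 1"
| "Cseq (a # L) = (1 - fps_const a * fps_X) * Cseq L"

lemma foldr_Aseq:
  assumes "\<forall>h\<in>set fs. compl_mult h" "prime (p::nat)"
  shows "foldr dconv fs dunit (p ^ j) = Aseq (map (\<lambda>h. h p) fs) $ j"
  using assms(1)
proof (induction fs arbitrary: j)
  case Nil
  have "p > 1" using assms prime_gt_1_nat by blast
  then have "p ^ j = 1 \<longleftrightarrow> j = 0" by simp
  then show ?case by (simp add: dunit_def)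
next
  case (Cons h fs)
  then show ?case
    using assms(2) by (simp add: dconv_prime_pow[OF _ assms(2)] fps_mult_nth)
qed

lemma geo_inv: "(1 - fps_const (a::complex) * fps_X) * Abs_fps (\<lambda>n. a ^ n) = 1"
proof (rule fps_ext)
  fix n
  show "((1 - fps_const a * fps_X) * Abs_fps (\<lambda>n. a ^ n)) $ n = (1::complex fps) $ n"
    by (cases n) (simp_all add: algebra_simps mult.assoc)
qed

lemma CA: "Cseq L * Aseq L = 1"
proof (induction L)
  case Nil then show ?case by simp
next
  case (Cons a L)
  have "Cseq (a # L) * Aseq (a # L) = ((1 - fps_const a * fps_X) * Abs_fps (\<lambda>n. a ^ n)) * (Cseq L * Aseq L)"
    by (simp add: algebra_simps)
  then show ?case using Cons geo_inv by simp
qed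

lemma Cseq_nth: "((1 - fps_const (a::complex) * fps_X) * C) $ k = C $ k - (if k = 0 then 0 else a * C $ (k - 1))"
proof -
  have "(1 - fps_const a * fps_X) * C = C - fps_const a * (fps_X * C)" by (simp add: algebra_simps)
  then show ?thesis by simp
qed

lemma Cseq_0: "Cseq L $ 0 = 1"
  by (induction L) (simp_all add: Cseq_nth)

lemma Cseq_deg: "k > length L \<Longrightarrow> Cseq L $ k = 0"
  by (induction L arbitrary: k) (simp_all add: Cseq_nth)

lemma Cseq_bound: "\<forall>a\<in>set L. norm a \<le> 1 \<Longrightarrow> norm (Cseq L $ k) \<le> 2 ^ length L"
proof (induction L arbitrary: k)
  case Nil then show ?case by simp
next
  case (Cons a L)
  have b1: "norm (Cseq L $ k) \<le> 2 ^ length L" using Cons by simp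
  have b2: "norm (a * Cseq L $ (k - 1)) \<le> 2 ^ length L"
    using Cons.IH[of "k-1"] Cons.prems by (simp add: norm_mult mult_le_one mult_le_cancel_right1)
      (meson mult_left_le_one_le norm_ge_zero order.trans)
  have "norm (Cseq (a # L) $ k) \<le> norm (Cseq L $ k) + norm (if k = 0 then 0 else a * Cseq L $ (k - 1))"
    by (simp only: Cseq.simps Cseq_nth norm_triangle_ineq4)
  also have "\<dots> \<le> 2 ^ length L + 2 ^ length L" using b1 b2 by (intro add_mono) auto
  finally show ?case by simp
qed

lemma Aseq_0: "Aseq L $ 0 = 1"
  by (induction L) simp_all

fun ubd :: "nat \<Rightarrow> nat \<Rightarrow> real" where
  "ubd 0 j = (if j = 0 then 1 else 0)"
| "ubd (Suc d) j = (\<Sum>i\<le>j. ubd d (j - i))"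

lemma ubd_nonneg: "ubd d j \<ge> 0"
  by (induction d arbitrary: j) (auto intro: sum_nonneg)

lemma ubd_le: "ubd d j \<le> (real j + 1) ^ d"
proof (induction d arbitrary: j)
  case 0 then show ?case by simp
next
  case (Suc d)
  have "ubd (Suc d) j \<le> (\<Sum>i\<le>j. (real j + 1) ^ d)"
    unfolding ubd.simps
  proof (rule sum_mono)
    fix i assume "i \<in> {..j}"
    have "ubd d (j - i) \<le> (real (j - i) + 1) ^ d" by (rule Suc)
    also have "\<dots> \<le> (real j + 1) ^ d" by (rule power_mono) auto
    finally show "ubd d (j - i) \<le> (real j + 1) ^ d" .
  qed
  also have "\<dots> = (real j + 1) ^ Suc d" by simp
  finally show ?case .
qed

lemma Aseq_bound: "\<forall>a\<in>set L. norm a \<le> 1 \<Longrightarrow> norm (Aseq L $ j) \<le> ubd (length L) j"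
proof (induction L arbitrary: j)
  case Nil then show ?case by simp
next
  case (Cons a L)
  have "norm (Aseq (a # L) $ j) = norm (\<Sum>i\<le>j. a ^ i * Aseq L $ (j - i))"
    by (simp add: fps_mult_nth atLeast0AtMost)
  also have "\<dots> \<le> (\<Sum>i\<le>j. norm (a ^ i * Aseq L $ (j - i)))" by (rule norm_sum)
  also have "\<dots> \<le> (\<Sum>i\<le>j. ubd (length L) (j - i))"
  proof (rule sum_mono)
    fix i assume "i \<in> {..j}"
    have "norm (a ^ i) \<le> 1" using Cons.prems by (simp add: norm_power power_le_one)
    then show "norm (a ^ i * Aseq L $ (j - i)) \<le> ubd (length L) (j - i)"
      using Cons.IH[of "j-i"] Cons.prems unfolding norm_mult
      by (metis list.set_intros(2) mult_left_le_one_le norm_ge_zero order.trans)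
  qed
  finally show ?case by simp
qed

lemma ubd_summable: "0 \<le> x \<Longrightarrow> x < 1 \<Longrightarrow> summable (\<lambda>j. ubd d j * x ^ j)"
proof (induction d)
  case 0
  have "(\<lambda>j. ubd 0 j * x ^ j) = (\<lambda>j. if j = 0 then 1 else 0)" by auto
  then show ?case by simp
next
  case (Suc d)
  have g: "summable (\<lambda>k. norm (x ^ k))" using Suc.prems by simp
  have u: "summable (\<lambda>k. norm (ubd d k * x ^ k))" using Suc by (simp add: ubd_nonneg)
  have "summable (\<lambda>k. \<Sum>i\<le>k. x ^ i * (ubd d (k - i) * x ^ (k - i)))"
    by (rule summable_Cauchy_product[OF g u])
  moreover have "(\<lambda>k. \<Sum>i\<le>k. x ^ i * (ubd d (k - i) * x ^ (k - i))) = (\<lambda>j. ubd (Suc d) j * x ^ j)"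
  proof
    fix k
    have "(\<Sum>i\<le>k. x ^ i * (ubd d (k - i) * x ^ (k - i))) = (\<Sum>i\<le>k. ubd d (k - i) * x ^ k)"
      by (rule sum.cong) (auto simp: power_add[symmetric])
    then show "(\<Sum>i\<le>k. x ^ i * (ubd d (k - i) * x ^ (k - i))) = ubd (Suc d) k * x ^ k"
      by (simp add: sum_distrib_right)
  qed
  ultimately show ?case by simp
qed



lemma rec_split_c:
  fixes c a :: "nat \<Rightarrow> complex"
  assumes "a 0 = 1" "(\<Sum>k\<le>j. c k * a (j - k)) = 0"
  shows "c j = - (\<Sum>k<j. c k * a (j - k))"
proof -
  have "(\<Sum>k\<le>j. c k * a (j - k)) = (\<Sum>k<j. c k * a (j - k)) + c j * a (j - j)"
    unfolding lessThan_Suc_atMost[symmetric] by (rule sum.lessThan_Suc)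
  then have "(\<Sum>k<j. c k * a (j - k)) + c j = 0" using assms by simp
  then show ?thesis by (simp add: eq_neg_iff_add_eq_0 add.commute)
qed

lemma core:
  fixes a b c c' :: "nat \<Rightarrow> complex" and d :: nat and Q Cc :: real
  defines "M \<equiv> (\<Sum>k=1..d. norm (a k - b k))"
  defines "V \<equiv> real d * (Q^d + Cc) + 1"
  defines "R \<equiv> 2 * real d * Cc + Q"
  defines "W \<equiv> 2 * real d * V^d + 1"
  assumes Q: "Q \<ge> 1" and Cc: "Cc \<ge> 0"
    and a0: "a 0 = 1" and b0: "b 0 = 1" and c0: "c 0 = 1" and c'0: "c' 0 = 1"
    and cd: "\<forall>k>d. c k = 0" and c'd: "\<forall>k>d. c' k = 0"
    and cb: "\<forall>k. norm (c k) \<le> Cc" and c'b: "\<forall>k. norm (c' k) \<le> Cc"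
    and ab: "\<forall>j. norm (a j) \<le> Q^j" and bb: "\<forall>j. norm (b j) \<le> Q^j"
    and ra: "\<forall>j\<ge>1. (\<Sum>k\<le>j. c k * a (j-k)) = 0"
    and rb: "\<forall>j\<ge>1. (\<Sum>k\<le>j. c' k * b (j-k)) = 0"
  shows "norm (a j - b j) \<le> W * R^j * M"
proof -
  have M0: "M \<ge> 0" unfolding M_def by (auto intro: sum_nonneg)
  have V1: "V \<ge> 1" unfolding V_def using Q Cc by auto
  have R1: "R \<ge> 1" unfolding R_def using Q Cc by (simp add: add_increasing)
  have W1: "W \<ge> 1" unfolding W_def using V1 by auto
  have dM: "norm (a k - b k) \<le> M" if "1 \<le> k" "k \<le> d" for k
    unfolding M_def by (rule member_le_sum) (use that in auto)
  have E1: "j \<le> d \<Longrightarrow> norm (c j - c' j) \<le> V^j * M" for j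
  proof (induction j rule: less_induct)
    case (less j)
    show ?case
    proof (cases j)
      case 0 then show ?thesis using c0 c'0 M0 by simp
    next
      case (Suc m)
      have j1: "1 \<le> j" using Suc by simp
      have cj: "c j = - (\<Sum>k<j. c k * a (j - k))"
        by (rule rec_split_c[where a=a, OF a0]) (use ra j1 in blast)
      have c'j: "c' j = - (\<Sum>k<j. c' k * b (j - k))"
        by (rule rec_split_c[where a=b, OF b0]) (use rb j1 in blast)
      have eq: "c j - c' j = - (\<Sum>k<j. (c k - c' k) * a (j - k) + c' k * (a (j - k) - b (j - k)))"
        unfolding cj c'j by (simp add: sum_subtractf sum.distrib algebra_simps)
      have "norm (c j - c' j) \<le> (\<Sum>k<j. norm ((c k - c' k) * a (j - k) + c' k * (a (j - k) - b (j - k))))"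
        unfolding eq norm_minus_cancel by (rule norm_sum)
      also have "\<dots> \<le> (\<Sum>k<j. V^m * M * Q^d + Cc * M)"
      proof (rule sum_mono)
        fix k assume k: "k \<in> {..<j}"
        have e: "norm (c k - c' k) \<le> V^m * M"
        proof -
          have "norm (c k - c' k) \<le> V^k * M" using less k Suc by auto
          also have "\<dots> \<le> V^m * M" using k Suc V1 M0
            by (intro mult_right_mono power_increasing) auto
          finally show ?thesis .
        qed
        have aa: "norm (a (j - k)) \<le> Q^d"
          using ab[rule_format, of "j-k"] power_increasing[of "j-k" d Q] Q less.prems
          by (meson diff_le_self le_trans order.trans)
        have dd: "norm (a (j - k) - b (j - k)) \<le> M" using dM[of "j-k"] k less.prems by auto
        have "norm ((c k - c' k) * a (j - k) + c' k * (a (j - k) - b (j - k)))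
              \<le> norm (c k - c' k) * norm (a (j - k)) + norm (c' k) * norm (a (j - k) - b (j - k))"
          by (metis norm_mult norm_triangle_ineq)
        also have "\<dots> \<le> V^m * M * Q^d + Cc * M"
          using e aa dd c'b M0 V1 Q Cc
          by (intro add_mono mult_mono) auto
        finally show "norm ((c k - c' k) * a (j - k) + c' k * (a (j - k) - b (j - k))) \<le> V^m * M * Q^d + Cc * M" .
      qed
      also have "\<dots> = real j * (V^m * M * Q^d + Cc * M)" by simp
      also have "\<dots> \<le> real d * (V^m * M * Q^d + Cc * V^m * M)"
        using less.prems M0 Cc V1 Q
        by (intro mult_mono add_mono) (auto simp: mult_right_mono one_le_power mult_le_cancel_left1)
      also have "\<dots> = (real d * (Q^d + Cc)) * (V^m * M)" by (simp add: algebra_simps)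
      also have "\<dots> \<le> V * (V^m * M)"
      proof (rule mult_right_mono)
        show "real d * (Q^d + Cc) \<le> V" unfolding V_def by simp
        show "0 \<le> V^m * M" using M0 V1 by simp
      qed
      also have "\<dots> = V^j * M" using Suc by simp
      finally show ?thesis .
    qed
  qed
  have E: "norm (c k - c' k) \<le> V^d * M" for k
  proof (cases "k \<le> d")
    case True
    then have "norm (c k - c' k) \<le> V^k * M" by (rule E1)
    also have "\<dots> \<le> V^d * M" using True V1 M0 by (intro mult_right_mono power_increasing) auto
    finally show ?thesis .
  next
    case False then show ?thesis using cd c'd M0 V1 by simp
  qed
  show ?thesis
  proof (induction j rule: less_induct)
    case (less j)
    show ?case
    proof (cases "j = 0")
      case True then show ?thesis using a0 b0 W1 M0 by simp
    next
      case j0: False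
      show ?thesis
      proof (cases "j \<le> d")
        case True
        have "norm (a j - b j) \<le> 1 * 1 * M" using dM[of j] True j0 by simp
        also have "\<dots> \<le> W * R^j * M" using W1 R1 M0
          by (intro mult_right_mono mult_mono one_le_power) auto
        finally show ?thesis .
      next
        case False
        then obtain m where jm: "j = Suc m" by (cases j) auto
        have red: "(\<Sum>k\<le>j. e k * x (j - k)) = (\<Sum>k\<le>d. e k * x (j - k))"
          if "\<forall>k>d. e k = 0" for e x :: "nat \<Rightarrow> complex"
          by (rule sum.mono_neutral_right) (use that False in auto)
        have aj: "a j = - (\<Sum>k\<in>{1..d}. c k * a (j - k))"
        proof -
          have "(\<Sum>k\<le>j. c k * a (j-k)) = 0" using ra j0 by auto
          then have "(\<Sum>k\<le>d. c k * a (j-k)) = 0" using red[OF cd] by simp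
          then have "c 0 * a j + (\<Sum>k\<in>{1..d}. c k * a (j - k)) = 0"
            by (simp add: atMost_atLeast0 sum.atLeast_Suc_atMost)
          then show ?thesis using c0 by (simp add: eq_neg_iff_add_eq_0)
        qed
        have bj: "b j = - (\<Sum>k\<in>{1..d}. c' k * b (j - k))"
        proof -
          have "(\<Sum>k\<le>j. c' k * b (j-k)) = 0" using rb j0 by auto
          then have "(\<Sum>k\<le>d. c' k * b (j-k)) = 0" using red[OF c'd] by simp
          then have "c' 0 * b j + (\<Sum>k\<in>{1..d}. c' k * b (j - k)) = 0"
            by (simp add: atMost_atLeast0 sum.atLeast_Suc_atMost)
          then show ?thesis using c'0 by (simp add: eq_neg_iff_add_eq_0)
        qed
        have eq: "a j - b j = - (\<Sum>k\<in>{1..d}. c k * (a (j - k) - b (j - k)) + (c k - c' k) * b (j - k))"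
          unfolding aj bj by (simp add: sum_subtractf sum.distrib algebra_simps)
        have "norm (a j - b j) \<le> (\<Sum>k\<in>{1..d}. norm (c k * (a (j - k) - b (j - k)) + (c k - c' k) * b (j - k)))"
          unfolding eq norm_minus_cancel by (rule norm_sum)
        also have "\<dots> \<le> (\<Sum>k\<in>{1..d}. Cc * (W * R^m * M) + V^d * M * Q^j)"
        proof (rule sum_mono)
          fix k assume k: "k \<in> {1..d}"
          have i1: "norm (a (j - k) - b (j - k)) \<le> W * R^m * M"
          proof -
            have "norm (a (j - k) - b (j - k)) \<le> W * R^(j-k) * M" using less k False by auto
            also have "\<dots> \<le> W * R^m * M" using k jm R1 W1 M0
              by (intro mult_right_mono mult_left_mono power_increasing) auto
            finally show ?thesis .
          qed
          have i2: "norm (b (j - k)) \<le> Q^j"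
            using bb[rule_format, of "j-k"] power_increasing[of "j-k" j Q] Q by auto
          have "norm (c k * (a (j - k) - b (j - k)) + (c k - c' k) * b (j - k))
              \<le> norm (c k) * norm (a (j - k) - b (j - k)) + norm (c k - c' k) * norm (b (j - k))"
            by (metis norm_mult norm_triangle_ineq)
          also have "\<dots> \<le> Cc * (W * R^m * M) + V^d * M * Q^j"
            using i1 i2 cb E[of k] Cc V1 M0
            by (intro add_mono mult_mono) auto
          finally show "norm (c k * (a (j - k) - b (j - k)) + (c k - c' k) * b (j - k)) \<le> Cc * (W * R^m * M) + V^d * M * Q^j" .
        qed
        also have "\<dots> = (real d * Cc) * (W * R^m * M) + (real d * V^d) * (M * Q^j)" by (simp add: algebra_simps)
        also have "\<dots> \<le> (R / 2) * (W * R^m * M) + (W / 2) * (M * R^j)"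
          using R1 W1 M0 Q Cc V1 unfolding R_def W_def
          by (intro add_mono mult_mono mult_left_mono power_mono) auto
        also have "\<dots> = W * R^j * M" using jm by (simp add: algebra_simps)
        finally show ?thesis .
      qed
    qed
  qed
qed


definition "Vc d = real d * (((2::real)^d)^d + 2^d) + 1"
definition "Rc d = 2 * real d * (2::real)^d + 2^d"
definition "Wc d = 2 * real d * Vc d ^ d + 1"

lemma two_pow_ge: "real j + 1 \<le> (2::real) ^ j"
  by (induction j) auto

lemma pp_bound:
  assumes fs: "\<forall>h\<in>set fs. compl_mult h \<and> (\<forall>n>0. norm (h n) \<le> 1)" "length fs = d"
    and gs: "\<forall>h\<in>set gs. compl_mult h \<and> (\<forall>n>0. norm (h n) \<le> 1)" "length gs = d"
    and p: "prime (p::nat)"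
  defines "A1 \<equiv> Aseq (map (\<lambda>h. h p) fs)" and "A2 \<equiv> Aseq (map (\<lambda>h. h p) gs)"
  shows "norm (A1 $ j - A2 $ j) \<le> Wc d * Rc d ^ j * (\<Sum>k=1..d. norm (A1 $ k - A2 $ k))"
proof -
  define C1 where "C1 = Cseq (map (\<lambda>h. h p) fs)"
  define C2 where "C2 = Cseq (map (\<lambda>h. h p) gs)"
  have p0: "p > 0" using p prime_gt_0_nat by blast
  have n1: "\<forall>a\<in>set (map (\<lambda>h. h p) fs). norm a \<le> 1" using fs p0 by auto
  have n2: "\<forall>a\<in>set (map (\<lambda>h. h p) gs). norm a \<le> 1" using gs p0 by auto
  have qb: "ubd d j \<le> ((2::real)^d)^j" for j
  proof -
    have "ubd d j \<le> (real j + 1) ^ d" by (rule ubd_le)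
    also have "\<dots> \<le> (2^j)^d" by (rule power_mono[OF two_pow_ge]) simp
    finally show ?thesis by (simp add: power_mult[symmetric] mult.commute)
  qed
  have rec: "(\<Sum>k\<le>j. C $ k * A $ (j - k)) = 0" if "C * A = 1" "j \<ge> 1" for C A :: "complex fps" and j
  proof -
    have "(C * A) $ j = 0" using that by simp
    then show ?thesis by (simp add: fps_mult_nth atMost_atLeast0)
  qed
  show ?thesis
    unfolding Wc_def Vc_def Rc_def
  proof (rule core[where Q="2^d" and Cc="2^d" and c="\<lambda>k. C1 $ k" and c'="\<lambda>k. C2 $ k"])
    show "A1 $ 0 = 1" "A2 $ 0 = 1" "C1 $ 0 = 1" "C2 $ 0 = 1"
      unfolding A1_def A2_def C1_def C2_def by (simp_all add: Aseq_0 Cseq_0)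
    show "\<forall>k>d. C1 $ k = 0" "\<forall>k>d. C2 $ k = 0"
      unfolding C1_def C2_def using fs gs by (auto intro: Cseq_deg)
    show "\<forall>k. norm (C1 $ k) \<le> 2^d" "\<forall>k. norm (C2 $ k) \<le> 2^d"
      unfolding C1_def C2_def using Cseq_bound[OF n1] Cseq_bound[OF n2] fs gs by auto
    show "\<forall>j. norm (A1 $ j) \<le> (2^d)^j"
      unfolding A1_def using Aseq_bound[OF n1] fs(2) qb by (metis length_map order.trans)
    show "\<forall>j. norm (A2 $ j) \<le> (2^d)^j"
      unfolding A2_def using Aseq_bound[OF n2] gs(2) qb by (metis length_map order.trans)
    show "\<forall>j\<ge>1. (\<Sum>k\<le>j. C1 $ k * A1 $ (j - k)) = 0" "\<forall>j\<ge>1. (\<Sum>k\<le>j. C2 $ k * A2 $ (j - k)) = 0"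
      unfolding A1_def A2_def C1_def C2_def using rec CA by auto
  qed auto
qed

theorem lemma8:
  fixes f g :: "nat \<Rightarrow> complex" and d :: nat and \<beta> :: real
  assumes "S_class d f" and "S_class d g" and "\<beta> > 0"
    and "Dhat \<beta> (enat d) f g < \<infinity>"
  shows "Dhat \<beta> \<infinity> f g < \<infinity>"
proof -
  obtain fs where fs: "length fs = d" "\<forall>h\<in>set fs. compl_mult h \<and> (\<forall>n>0. norm (h n) \<le> 1)"
      "\<forall>n>0. f n = foldr dconv fs dunit n"
    using assms(1) unfolding S_class_def by blast
  obtain gs where gs: "length gs = d" "\<forall>h\<in>set gs. compl_mult h \<and> (\<forall>n>0. norm (h n) \<le> 1)"
      "\<forall>n>0. g n = foldr dconv gs dunit n"
    using assms(2) unfolding S_class_def by blast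
  define R where "R = Rc d"
  define W where "W = Wc d"
  have R1: "R \<ge> 1" unfolding R_def Rc_def by (simp add: add_increasing)
  have W1: "W \<ge> 1" unfolding W_def Wc_def Vc_def by simp
  define t where "t = (\<lambda>(p::nat, j::nat). norm (f (p^j) - g (p^j)) / real p powr (real j * \<beta>))"
  define Sd where "Sd = {(p::nat, j::nat). prime p \<and> 1 \<le> j \<and> j \<le> d}"
  define Si where "Si = {(p::nat, j::nat). prime p \<and> 1 \<le> j}"
  have lam: "(\<lambda>(p, j). ennreal (norm (f (p ^ j) - g (p ^ j)) / real p powr (real j * \<beta>))) = (\<lambda>x. ennreal (t x))"
    by (rule ext) (auto simp: t_def split: prod.splits)
  have Dd: "Dhat \<beta> (enat d) f g = infsum (\<lambda>x. ennreal (t x)) Sd"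
    unfolding Dhat_def lam Sd_def by simp
  have Di: "Dhat \<beta> \<infinity> f g = infsum (\<lambda>x. ennreal (t x)) Si"
    unfolding Dhat_def lam Si_def by simp
  define D where "D = enn2real (Dhat \<beta> (enat d) f g)"
  have t0: "t x \<ge> 0" for x unfolding t_def by (auto split: prod.splits)
  have D0: "D \<ge> 0" unfolding D_def by simp
  have hD: "sum t G \<le> D" if "finite G" "G \<subseteq> Sd" for G
  proof -
    have "ennreal (sum t G) = sum (\<lambda>x. ennreal (t x)) G" using t0 by simp
    also have "\<dots> = infsum (\<lambda>x. ennreal (t x)) G" using that by simp
    also have "\<dots> \<le> infsum (\<lambda>x. ennreal (t x)) Sd"
      by (rule infsum_mono_neutral) (use that in \<open>auto intro: nonneg_summable_on_complete\<close>)
    finally have "ennreal (sum t G) \<le> Dhat \<beta> (enat d) f g" using Dd by simp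
    then have "enn2real (ennreal (sum t G)) \<le> D" unfolding D_def
      using assms(4) by (intro enn2real_mono) auto
    then show ?thesis using t0 by (simp add: sum_nonneg)
  qed
  have Aeq: "f (p^j) = Aseq (map (\<lambda>h. h p) fs) $ j" "g (p^j) = Aseq (map (\<lambda>h. h p) gs) $ j"
    if "prime p" for p j
  proof -
    have "p ^ j > 0" using that prime_gt_0_nat by simp
    then show "f (p^j) = Aseq (map (\<lambda>h. h p) fs) $ j" "g (p^j) = Aseq (map (\<lambda>h. h p) gs) $ j"
      using fs gs foldr_Aseq[OF _ that] by auto
  qed
  have P1: "norm (f (p^j) - g (p^j)) \<le> W * R^j * (\<Sum>k=1..d. norm (f (p^k) - g (p^k)))"
    if "prime p" for p j
    using pp_bound[OF fs(2,1) gs(2,1) that, of j] Aeq[OF that] unfolding W_def R_def by simp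
  have P2: "norm (f (p^j) - g (p^j)) \<le> 2 * ubd d j" if "prime p" for p j
  proof -
    have n1: "\<forall>a\<in>set (map (\<lambda>h. h p) fs). norm a \<le> 1" using fs that prime_gt_0_nat by auto
    have n2: "\<forall>a\<in>set (map (\<lambda>h. h p) gs). norm a \<le> 1" using gs that prime_gt_0_nat by auto
    have "norm (f (p^j) - g (p^j)) \<le> norm (f (p^j)) + norm (g (p^j))" by (rule norm_triangle_ineq4)
    also have "\<dots> \<le> ubd d j + ubd d j"
      using Aseq_bound[OF n1, of j] Aseq_bound[OF n2, of j] fs(1) gs(1) Aeq[OF that] by simp
    finally show ?thesis by simp
  qed
  define x0 where "x0 = 1 / 2 powr \<beta>"
  have b2: "2 powr \<beta> > 1" using assms(3) by (simp add: gr_one_powr)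
  have x0: "0 \<le> x0" "x0 < 1" unfolding x0_def using b2 by auto
  have sumS: "summable (\<lambda>j. ubd d j * x0^j)" by (rule ubd_summable[OF x0])
  define S0 where "S0 = suminf (\<lambda>j. ubd d j * x0^j)"
  define N0 where "N0 = nat \<lceil>(2*R) powr (1/\<beta>)\<rceil>"
  have bigp: "real p powr \<beta> \<ge> 2*R" if "p > N0" for p
  proof -
    have "(2*R) powr (1/\<beta>) \<le> real N0" unfolding N0_def by (rule real_nat_ceiling_ge)
    also have "\<dots> \<le> real p" using that by simp
    finally have "((2*R) powr (1/\<beta>)) powr \<beta> \<le> real p powr \<beta>"
      using assms(3) by (intro powr_mono2) auto
    then show ?thesis using assms(3) R1 by (simp add: powr_powr)
  qed
  have E2: "t (p,j) \<le> 2 * (ubd d j * x0^j)" if "prime p" for p j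
  proof -
    have p2: "real p \<ge> 2" using prime_ge_2_nat[OF that] by simp
    have q: "x0^j = 1 / 2 powr (real j * \<beta>)"
    proof -
      have "(2 powr \<beta>) ^ j = (2 powr \<beta>) powr real j" by (simp add: powr_realpow)
      also have "\<dots> = 2 powr (real j * \<beta>)" by (simp add: powr_powr mult.commute)
      finally show ?thesis unfolding x0_def by (simp add: power_divide)
    qed
    have le: "2 powr (real j * \<beta>) \<le> real p powr (real j * \<beta>)"
      using p2 assms(3) by (intro powr_mono2) auto
    have pos: "2 powr (real j * \<beta>) > 0" by simp
    have "t (p,j) = norm (f (p^j) - g (p^j)) / real p powr (real j * \<beta>)" unfolding t_def by simp
    also have "\<dots> \<le> norm (f (p^j) - g (p^j)) / 2 powr (real j * \<beta>)"
      using le pos p2 by (intro divide_left_mono) (auto intro!: mult_pos_pos)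
    also have "\<dots> \<le> 2 * ubd d j / 2 powr (real j * \<beta>)"
      using P2[OF that] pos by (intro divide_right_mono) auto
    also have "\<dots> = 2 * (ubd d j * x0^j)" unfolding q by simp
    finally show ?thesis .
  qed
  have E3: "t (p,j) \<le> W * R^d * 2^d * (1/2)^j * (\<Sum>k=1..d. t (p,k))"
    if pr: "prime p" and pN: "p > N0" and jd: "j > d" for p j
  proof -
    define Y where "Y = real p powr \<beta>"
    have Y2: "Y \<ge> 2*R" unfolding Y_def by (rule bigp[OF pN])
    have Y0: "Y > 0" using Y2 R1 by simp
    have hY: "real p powr (real i * \<beta>) = Y^i" for i
    proof -
      have "real p powr (real i * \<beta>) = (real p powr \<beta>) powr real i" by (simp add: powr_powr mult.commute)
      then show ?thesis using Y0 unfolding Y_def by (simp add: powr_realpow)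
    qed
    have tY: "t (p,i) = norm (f (p^i) - g (p^i)) / Y^i" for i by (simp add: t_def hY)
    define S where "S = (\<Sum>k=1..d. t (p,k))"
    define M where "M = (\<Sum>k=1..d. norm (f (p^k) - g (p^k)))"
    have S0': "S \<ge> 0" unfolding S_def using t0 by (simp add: sum_nonneg)
    have MS: "M \<le> Y^d * S"
      unfolding M_def S_def sum_distrib_left
    proof (rule sum_mono)
      fix k assume k: "k \<in> {1..d}"
      have "norm (f (p^k) - g (p^k)) = Y^k * t (p,k)" using tY[of k] Y0 by simp
      also have "\<dots> \<le> Y^d * t (p,k)" using k Y2 R1 t0
        by (intro mult_right_mono power_increasing) auto
      finally show "norm (f (p^k) - g (p^k)) \<le> Y^d * t (p,k)" .
    qed
    obtain i where ji: "j = d + i" using jd by (metis less_imp_add_positive)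
    have "t (p,j) \<le> W * R^j * M / Y^j" unfolding tY M_def
      using P1[OF pr, of j] Y0 by (intro divide_right_mono) auto
    also have "\<dots> \<le> W * R^j * (Y^d * S) / Y^j"
      using MS W1 R1 Y0 by (intro divide_right_mono mult_left_mono) auto
    also have "\<dots> = W * R^d * S * (R / Y)^i" unfolding ji using Y0
      by (simp add: power_add power_divide field_simps)
    also have "\<dots> \<le> W * R^d * S * (1/2)^i"
    proof (intro mult_left_mono power_mono)
      show "R / Y \<le> 1/2" using Y2 Y0 by (simp add: divide_le_eq)
      show "0 \<le> R / Y" using Y0 R1 by simp
      show "0 \<le> W * R^d * S" using W1 R1 S0' by simp
    qed
    also have "\<dots> = W * R^d * 2^d * (1/2)^j * S" unfolding ji by (simp add: power_add power_divide)
    finally show ?thesis unfolding S_def .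
  qed
  define K where "K = W * R^d * 2^d"
  have K0: "K \<ge> 0" unfolding K_def using W1 R1 by simp
  define B where "B = D + (real N0 + 1) * (2 * S0) + K * (D * 2)"
  have fin: "sum t F \<le> B" if finF: "finite F" and FS: "F \<subseteq> Si" for F
  proof -
    define F1 where "F1 = F \<inter> {x. snd x \<le> d}"
    define G where "G = F - {x. snd x \<le> d}"
    define F2 where "F2 = G \<inter> {x. fst x \<le> N0}"
    define F3 where "F3 = G - {x. fst x \<le> N0}"
    have finG: "finite G" unfolding G_def using finF by simp
    have sp1: "sum t F = sum t F1 + sum t G" unfolding F1_def G_def by (rule sum.Int_Diff[OF finF])
    have sp2: "sum t G = sum t F2 + sum t F3" unfolding F2_def F3_def by (rule sum.Int_Diff[OF finG])
    have h1: "sum t F1 \<le> D"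
      by (rule hD) (use finF FS in \<open>auto simp: F1_def Sd_def Si_def\<close>)
    have h2: "sum t F2 \<le> (real N0 + 1) * (2 * S0)"
    proof -
      define J where "J = snd ` F"
      have finJ: "finite J" unfolding J_def using finF by simp
      have "sum t F2 \<le> sum (\<lambda>(p,j). 2 * (ubd d j * x0^j)) F2"
      proof (rule sum_mono)
        fix x assume "x \<in> F2"
        then have "prime (fst x)" using FS unfolding F2_def G_def Si_def by auto
        then show "t x \<le> (\<lambda>(p,j). 2 * (ubd d j * x0^j)) x" using E2 by (cases x) auto
      qed
      also have "\<dots> \<le> sum (\<lambda>(p,j). 2 * (ubd d j * x0^j)) ({..N0} \<times> J)"
      proof (rule sum_mono2)
        show "finite ({..N0} \<times> J)" using finJ by simp
        show "F2 \<subseteq> {..N0} \<times> J" unfolding F2_def G_def J_def by force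
        show "\<And>b. b \<in> {..N0} \<times> J - F2 \<Longrightarrow> 0 \<le> (\<lambda>(p,j). 2 * (ubd d j * x0^j)) b"
          using ubd_nonneg x0 by auto
      qed
      also have "\<dots> = (\<Sum>p\<le>N0. \<Sum>j\<in>J. 2 * (ubd d j * x0^j))"
        by (rule sum.cartesian_product[symmetric])
      also have "\<dots> = (real N0 + 1) * (2 * (\<Sum>j\<in>J. ubd d j * x0^j))"
        by (simp add: sum_distrib_left add.commute)
      also have "\<dots> \<le> (real N0 + 1) * (2 * S0)"
        unfolding S0_def using sumS finJ ubd_nonneg x0
        by (intro mult_left_mono sum_le_suminf) auto
      finally show ?thesis .
    qed
    have h3: "sum t F3 \<le> K * (D * 2)"
    proof -
      define P where "P = fst ` F3"
      define J where "J = snd ` F3"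
      have finF3: "finite F3" unfolding F3_def using finG by simp
      have finP: "finite P" "finite J" unfolding P_def J_def using finF3 by auto
      have St0: "(\<Sum>k=1..d. t (p,k)) \<ge> 0" for p using t0 by (simp add: sum_nonneg)
      let ?h = "\<lambda>(p,j). K * (1/2)^j * (\<Sum>k=1..d. t (p,k))"
      have "sum t F3 \<le> sum ?h F3"
      proof (rule sum_mono)
        fix x assume "x \<in> F3"
        then have "prime (fst x)" "fst x > N0" "snd x > d" using FS unfolding F3_def G_def Si_def by auto
        then show "t x \<le> ?h x" using E3 unfolding K_def by (cases x) auto
      qed
      also have "\<dots> \<le> sum ?h (P \<times> J)"
      proof (rule sum_mono2)
        show "finite (P \<times> J)" using finP by simp
        show "F3 \<subseteq> P \<times> J" unfolding P_def J_def by force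
        show "\<And>b. b \<in> P \<times> J - F3 \<Longrightarrow> 0 \<le> ?h b"
          using K0 St0 by auto
      qed
      also have "\<dots> = (\<Sum>p\<in>P. \<Sum>j\<in>J. K * (1/2)^j * (\<Sum>k=1..d. t (p,k)))"
        by (rule sum.cartesian_product[symmetric])
      also have "\<dots> = K * ((\<Sum>p\<in>P. \<Sum>k=1..d. t (p,k)) * (\<Sum>j\<in>J. (1/2::real)^j))"
      proof -
        have gen: "(\<Sum>p\<in>P. \<Sum>j\<in>J. K * (1/2)^j * u p) = K * ((\<Sum>p\<in>P. u p) * (\<Sum>j\<in>J. (1/2::real)^j))"
          for u :: "nat \<Rightarrow> real"
        proof -
          have "K * ((\<Sum>p\<in>P. u p) * (\<Sum>j\<in>J. (1/2::real)^j)) = K * (\<Sum>p\<in>P. \<Sum>j\<in>J. u p * (1/2)^j)"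
            by (simp only: sum_product)
          also have "\<dots> = (\<Sum>p\<in>P. \<Sum>j\<in>J. K * (u p * (1/2)^j))" by (simp only: sum_distrib_left)
          also have "\<dots> = (\<Sum>p\<in>P. \<Sum>j\<in>J. K * (1/2)^j * u p)" by (simp add: mult_ac)
          finally show ?thesis by (rule sym)
        qed
        show ?thesis by (rule gen)
      qed
      also have "\<dots> \<le> K * (D * 2)"
      proof (intro mult_left_mono mult_mono K0)
        have "(\<Sum>p\<in>P. \<Sum>k=1..d. t (p,k)) = sum t (P \<times> {1..d})"
          by (simp add: sum.cartesian_product)
        also have "\<dots> \<le> D"
        proof (rule hD)
          show "finite (P \<times> {1..d})" using finP by simp
          show "P \<times> {1..d} \<subseteq> Sd" using FS unfolding P_def F3_def G_def Si_def Sd_def by force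
        qed
        finally show "(\<Sum>p\<in>P. \<Sum>k=1..d. t (p,k)) \<le> D" .
        have "(\<Sum>j\<in>J. (1/2::real)^j) \<le> (\<Sum>j. (1/2::real)^j)"
          using finP by (intro sum_le_suminf) (auto simp: summable_geometric)
        also have "\<dots> = 2" using suminf_geometric[of "1/2::real"] by simp
        finally show "(\<Sum>j\<in>J. (1/2::real)^j) \<le> 2" .
        show "0 \<le> D" by (rule D0)
        show "0 \<le> (\<Sum>j\<in>J. (1/2::real)^j)" by (simp add: sum_nonneg)
      qed
      finally show ?thesis .
    qed
    show ?thesis unfolding B_def using sp1 sp2 h1 h2 h3 by linarith
  qed
  have "Dhat \<beta> \<infinity> f g \<le> ennreal B"
  proof -
    have "Dhat \<beta> \<infinity> f g = (SUP F\<in>{F. finite F \<and> F \<subseteq> Si}. sum (\<lambda>x. ennreal (t x)) F)"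
      unfolding Di by (rule nonneg_infsum_complete) simp
    also have "\<dots> \<le> ennreal B"
    proof (rule SUP_least)
      fix F assume "F \<in> {F. finite F \<and> F \<subseteq> Si}"
      then have "sum t F \<le> B" using fin by auto
      then show "sum (\<lambda>x. ennreal (t x)) F \<le> ennreal B" using t0 by (simp add: ennreal_leI)
    qed
    finally show ?thesis .
  qed
  then show ?thesis using order.strict_trans1 by fastforce
qed
end
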